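(* Let $n,m$ be positive integers, $\mu_1=\min(n,m)$, $\mu_2=\max(n,m)$. Then \[ P_n^m(g)=W_{\mu_1}(g)\quad\text{for } 0\le g\le \mu_2, \] and \[ P_n^m(g)=W_n(g)+W_m(g)-W_{n+m}(g)\quad\text{for } \mu_2\le g\le n+m . \]
   Context: For positive integers $n,m$ and an integer $s\ge 0$, $P_n^m(s)$ denotes the number of tuples $(x_1,\dots,x_m)$ of non-negative integers satisfying $\sum_{r=1}^m r\,x_r=s$ and $\sum_{r=1}^m x_r\le n$. Equivalently, $P_n^m(s)$ is the coefficient of $t^s$ in the Gaussian polynomial $G(n,m;t)=\frac{\prod_{i=1}^{n+m}(1-t^i)}{\prod_{u=1}^{n}(1-t^u)\prod_{v=1}^{m}(1-t^v)}=\sum_{s=0}^{nm}P_n^m(s)t^s$. For a positive integer $k$ and integer $s\ge0$, $W_k(s)$ denotes the number of partitions of $s$ into parts from $\{1,\dots,k\}$, i.e. the coefficient of $t^s$ in $\prod_{i=1}^k\frac{1}{1-t^i}=\sum_{s\ge0}W_k(s)t^s$; in particular $W_k(0)=1$. *)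

theory Defs
  imports Main
begin

definition P :: "nat \<Rightarrow> nat \<Rightarrow> nat \<Rightarrow> nat" where
  "P n m s = card {x :: nat \<Rightarrow> nat. (\<forall>r. r \<notin> {1..m} \<longrightarrow> x r = 0)
      \<and> (\<Sum>r=1..m. r * x r) = s \<and> (\<Sum>r=1..m. x r) \<le> n}"

definition W :: "nat \<Rightarrow> nat \<Rightarrow> nat" where
  "W k s = card {c :: nat \<Rightarrow> nat. (\<forall>r. r \<notin> {1..k} \<longrightarrow> c r = 0)
      \<and> (\<Sum>r=1..k. r * c r) = s}"

end

theory Submission imports Defs begin

definition S :: "nat \<Rightarrow> nat \<Rightarrow> nat \<Rightarrow> (nat \<Rightarrow> nat) set" where
  "S n m s = {x :: nat \<Rightarrow> nat. (\<forall>r. r \<notin> {1..m} \<longrightarrow> x r = 0)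
      \<and> (\<Sum>r=1..m. r * x r) = s \<and> (\<Sum>r=1..m. x r) \<le> n}"

lemma P_S: "P n m s = card (S n m s)" by (simp add: P_def S_def)

lemma term_le: fixes x :: "nat \<Rightarrow> nat" shows "r \<in> {1..m} \<Longrightarrow> x r \<le> (\<Sum>r=1..m. r * x r)"
proof -
  assume r: "r \<in> {1..m}"
  have "1 * x r \<le> r * x r" using r by (metis atLeastAtMost_iff mult_le_mono1)
  hence "x r \<le> r * x r" by simp
  also have "\<dots> \<le> (\<Sum>r=1..m. r * x r)" using r by (intro member_le_sum) auto
  finally show ?thesis .
qed

lemma finite_S: "finite (S n m s)"
proof (rule finite_subset)
  show "S n m s \<subseteq> {f. \<forall>x. (x \<in> {1..m} \<longrightarrow> f x \<in> {0..s}) \<and> (x \<notin> {1..m} \<longrightarrow> f x = 0)}"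
    unfolding S_def using term_le by fastforce
  show "finite \<dots>" by (rule finite_set_of_finite_funs) auto
qed

lemma S_zero_m: "S n 0 s = (if s = 0 then {\<lambda>_. 0} else {})"
  unfolding S_def by (auto simp: fun_eq_iff)

lemma S_zero_n: "S 0 m s = (if s = 0 then {\<lambda>_. 0} else {})"
  unfolding S_def by (auto simp: fun_eq_iff) (metis One_nat_def atLeastAtMost_iff)

lemma P_zero_m: "P n 0 s = (if s = 0 then 1 else 0)" by (simp add: P_S S_zero_m)
lemma P_zero_n: "P 0 m s = (if s = 0 then 1 else 0)" by (simp add: P_S S_zero_n)

lemma sum_top: "(\<Sum>r=1..Suc b. g r) = (\<Sum>r=1..b. g r) + (g (Suc b) :: nat)"
  by simp

lemma sum_upd_top: "(\<Sum>r=1..b. g r ((x(Suc b := v)) r)) = (\<Sum>r=1..b. g r (x r) :: nat)"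
  by (rule sum.cong) auto

lemma rec2: "P (Suc a) (Suc b) s = P (Suc a) b s + (if Suc b \<le> s then P a (Suc b) (s - Suc b) else 0)"
proof -
  let ?A = "S (Suc a) (Suc b) s"
  let ?A1 = "{x\<in>?A. x (Suc b) = 0}"
  let ?A2 = "{x\<in>?A. x (Suc b) \<noteq> 0}"
  have fin: "finite ?A" by (rule finite_S)
  have spl: "?A = ?A1 \<union> ?A2" by auto
  have c12: "card (?A1 \<union> ?A2) = card ?A1 + card ?A2"
    by (rule card_Un_disjoint) (use fin in auto)
  have c: "card ?A = card ?A1 + card ?A2"
    using arg_cong[OF spl, of card] c12 by simp
  have E1: "?A1 = S (Suc a) b s"
  proof (intro set_eqI iffI)
    fix x assume "x \<in> ?A1"
    then show "x \<in> S (Suc a) b s" unfolding S_def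
      by (auto simp: sum_top) (metis atLeastAtMost_iff le_Suc_eq)
  next
    fix x assume "x \<in> S (Suc a) b s"
    then show "x \<in> ?A1" unfolding S_def
      by (auto simp: sum_top)
  qed
  have E2: "card ?A2 = (if Suc b \<le> s then P a (Suc b) (s - Suc b) else 0)"
  proof (cases "Suc b \<le> s")
    case True
    have "bij_betw (\<lambda>x. x(Suc b := x (Suc b) - 1)) ?A2 (S a (Suc b) (s - Suc b))"
    proof (rule bij_betw_byWitness[where f'="\<lambda>y. y(Suc b := y (Suc b) + 1)"])
      show "\<forall>x\<in>?A2. (x(Suc b := x (Suc b) - 1))(Suc b := (x(Suc b := x (Suc b) - 1)) (Suc b) + 1) = x"
        by (auto simp: fun_eq_iff)
      show "\<forall>y\<in>S a (Suc b) (s - Suc b). (y(Suc b := y (Suc b) + 1))(Suc b := (y(Suc b := y (Suc b) + 1)) (Suc b) - 1) = y"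
        by (auto simp: fun_eq_iff)
      show "(\<lambda>x. x(Suc b := x (Suc b) - 1)) ` ?A2 \<subseteq> S a (Suc b) (s - Suc b)"
      proof (rule image_subsetI)
        fix x assume "x \<in> ?A2"
        then show "x(Suc b := x (Suc b) - 1) \<in> S a (Suc b) (s - Suc b)"
          unfolding S_def
          apply (simp add: sum_top sum_upd_top)
          apply (cases "x (Suc b)")
           apply (auto simp: algebra_simps)
          done
      qed
      show "(\<lambda>y. y(Suc b := y (Suc b) + 1)) ` S a (Suc b) (s - Suc b) \<subseteq> ?A2"
      proof (rule image_subsetI)
        fix y assume y: "y \<in> S a (Suc b) (s - Suc b)"
        then show "y(Suc b := y (Suc b) + 1) \<in> ?A2"
          unfolding S_def using True
          by (simp add: sum_top sum_upd_top algebra_simps)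
      qed
    qed
    then show ?thesis using True by (simp add: P_S bij_betw_same_card)
  next
    case False
    have "?A2 = {}"
    proof (rule equals0I)
      fix x assume "x \<in> ?A2"
      hence x: "x \<in> ?A" "x (Suc b) \<noteq> 0" by auto
      have "Suc b * 1 \<le> Suc b * x (Suc b)" using x(2) by (intro mult_le_mono2) simp
      also have "\<dots> \<le> (\<Sum>r=1..Suc b. r * x r)" by (intro member_le_sum) auto
      also have "\<dots> = s" using x(1) by (simp add: S_def)
      finally show False using False by simp
    qed
    then show ?thesis using False by (simp only: card.empty) simp
  qed
  show ?thesis using c E1 E2 by (simp add: P_S)
qed

lemma sum_bot: "(\<Sum>r=1..Suc b. h r) = h 1 + (\<Sum>r=1..b. h (Suc r) :: nat)"
proof -
  have "(\<Sum>r=1..Suc b. h r) = h 1 + (\<Sum>r=Suc 1..Suc b. h r)"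
    by (rule sum.atLeast_Suc_atMost) simp
  also have "(\<Sum>r=Suc 1..Suc b. h r) = (\<Sum>r=1..b. h (Suc r))"
    by (rule sum.shift_bounds_cl_Suc_ivl)
  finally show ?thesis .
qed

lemma parts_le_size: fixes x :: "nat \<Rightarrow> nat" shows "(\<Sum>r=1..m. x r) \<le> (\<Sum>r=1..m. r * x r)"
proof (rule sum_mono)
  fix r assume r: "r \<in> {1..m}"
  have "1 * x r \<le> r * x r" using r by (metis atLeastAtMost_iff mult_le_mono1)
  thus "x r \<le> r * x r" by simp
qed

lemma rec1: "P (Suc a) (Suc b) s = P a (Suc b) s + (if Suc a \<le> s then P (Suc a) b (s - Suc a) else 0)"
proof -
  let ?A = "S (Suc a) (Suc b) s"
  let ?A1 = "{x\<in>?A. (\<Sum>r=1..Suc b. x r) \<le> a}"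
  let ?A2 = "{x\<in>?A. (\<Sum>r=1..Suc b. x r) = Suc a}"
  have fin: "finite ?A" by (rule finite_S)
  have spl: "?A = ?A1 \<union> ?A2" unfolding S_def by auto
  have c12: "card (?A1 \<union> ?A2) = card ?A1 + card ?A2"
    by (rule card_Un_disjoint) (use fin in auto)
  have c: "card ?A = card ?A1 + card ?A2"
    using arg_cong[OF spl, of card] c12 by simp
  have E1: "?A1 = S a (Suc b) s" unfolding S_def by auto
  have E2: "card ?A2 = (if Suc a \<le> s then P (Suc a) b (s - Suc a) else 0)"
  proof (cases "Suc a \<le> s")
    case True
    define f where "f = (\<lambda>(x::nat\<Rightarrow>nat) r. if r \<in> {1..b} then x (Suc r) else 0)"
    define g where "g = (\<lambda>(y::nat\<Rightarrow>nat) r. if r = 1 then Suc a - (\<Sum>r=1..b. y r)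
                         else if r \<in> {2..Suc b} then y (r - 1) else 0)"
    have "bij_betw f ?A2 (S (Suc a) b (s - Suc a))"
    proof (rule bij_betw_byWitness[where f'=g])
      show "\<forall>x\<in>?A2. g (f x) = x"
      proof
        fix x assume x: "x \<in> ?A2"
        have sx: "(\<Sum>r=1..b. f x r) = (\<Sum>r=1..b. x (Suc r))"
          by (rule sum.cong) (auto simp: f_def)
        have tot: "x 1 + (\<Sum>r=1..b. x (Suc r)) = Suc a" using x sum_bot[of x b] by simp
        have supp: "\<And>r. r \<notin> {1..Suc b} \<Longrightarrow> x r = 0" using x by (simp add: S_def)
        show "g (f x) = x"
        proof
          fix r
          show "g (f x) r = x r"
          proof (cases "r = 1")
            case True then show ?thesis using tot sx by (simp add: g_def)
          next
            case False
            show ?thesis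
            proof (cases "r \<in> {2..Suc b}")
              case True
              then show ?thesis using False by (auto simp: g_def f_def)
            next
              case F2: False
              then have "r \<notin> {1..Suc b}" using False by auto
              then have "x r = 0" using supp by blast
              moreover have "g (f x) r = 0" using False F2 unfolding g_def by auto
              ultimately show ?thesis by simp
            qed
          qed
        qed
      qed
      show "\<forall>y\<in>S (Suc a) b (s - Suc a). f (g y) = y"
      proof
        fix y assume y: "y \<in> S (Suc a) b (s - Suc a)"
        have supp: "\<And>r. r \<notin> {1..b} \<Longrightarrow> y r = 0" using y by (simp add: S_def)
        show "f (g y) = y"
        proof
          fix r show "f (g y) r = y r"
            using supp[of r] by (auto simp: f_def g_def)
        qed
      qed
      show "f ` ?A2 \<subseteq> S (Suc a) b (s - Suc a)"
      proof (rule image_subsetI)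
        fix x assume x: "x \<in> ?A2"
        have sx: "(\<Sum>r=1..b. f x r) = (\<Sum>r=1..b. x (Suc r))"
          by (rule sum.cong) (auto simp: f_def)
        have sx2: "(\<Sum>r=1..b. r * f x r) = (\<Sum>r=1..b. r * x (Suc r))"
          by (rule sum.cong) (auto simp: f_def)
        have tot: "x 1 + (\<Sum>r=1..b. x (Suc r)) = Suc a" using x sum_bot[of x b] by simp
        have "s = (\<Sum>r=1..Suc b. r * x r)" using x by (simp add: S_def)
        also have "\<dots> = x 1 + (\<Sum>r=1..b. Suc r * x (Suc r))" using sum_bot[of "\<lambda>r. r * x r" b] by simp
        also have "(\<Sum>r=1..b. Suc r * x (Suc r)) = (\<Sum>r=1..b. x (Suc r)) + (\<Sum>r=1..b. r * x (Suc r))"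
          by (simp add: sum.distrib)
        finally have ss: "s = x 1 + (\<Sum>r=1..b. x (Suc r)) + (\<Sum>r=1..b. r * x (Suc r))" by simp
        show "f x \<in> S (Suc a) b (s - Suc a)"
          unfolding S_def using sx sx2 tot ss by (auto simp: f_def)
      qed
      show "g ` S (Suc a) b (s - Suc a) \<subseteq> ?A2"
      proof (rule image_subsetI)
        fix y assume y: "y \<in> S (Suc a) b (s - Suc a)"
        have sy: "(\<Sum>r=1..b. g y (Suc r)) = (\<Sum>r=1..b. y r)"
          by (rule sum.cong) (auto simp: g_def)
        have sy2: "(\<Sum>r=1..b. Suc r * g y (Suc r)) = (\<Sum>r=1..b. y r) + (\<Sum>r=1..b. r * y r)"
          by (subst sum.distrib[symmetric], rule sum.cong) (auto simp: g_def)
        have yle: "(\<Sum>r=1..b. y r) \<le> Suc a" and ys: "(\<Sum>r=1..b. r * y r) = s - Suc a"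
          using y by (auto simp: S_def)
        have g1: "g y 1 = Suc a - (\<Sum>r=1..b. y r)" by (simp add: g_def)
        have supp: "\<forall>r. r \<notin> {1..Suc b} \<longrightarrow> g y r = 0" by (auto simp: g_def)
        have "(\<Sum>r=1..Suc b. g y r) = Suc a" using sy g1 yle sum_bot[of "g y" b] by simp
        moreover have "(\<Sum>r=1..Suc b. r * g y r) = s"
          using sy2 g1 yle ys True sum_bot[of "\<lambda>r. r * g y r" b] by simp
        ultimately show "g y \<in> ?A2" using supp by (simp add: S_def)
      qed
    qed
    then show ?thesis using True by (simp add: P_S bij_betw_same_card)
  next
    case False
    have "?A2 = {}"
    proof (rule equals0I)
      fix x assume "x \<in> ?A2"
      hence "Suc a \<le> s" using parts_le_size[of x "Suc b"] by (simp add: S_def)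
      thus False using False by simp
    qed
    then show ?thesis using False by (simp only: card.empty) simp
  qed
  show ?thesis using c E1 E2 by (simp add: P_S)
qed

lemma P_sym: "P a b s = P b a s"
proof (induction "a+b" arbitrary: a b s rule: less_induct)
  case less
  show ?case
  proof (cases a)
    case 0 then show ?thesis by (simp add: P_zero_m P_zero_n)
  next
    case (Suc a')
    show ?thesis
    proof (cases b)
      case 0 then show ?thesis by (simp add: P_zero_m P_zero_n)
    next
      case (Suc b')
      have h1: "P (Suc a') b' s = P b' (Suc a') s"
        by (rule less.hyps) (use \<open>a = Suc a'\<close> \<open>b = Suc b'\<close> in simp)
      have h2: "P a' (Suc b') (s - Suc b') = P (Suc b') a' (s - Suc b')"
        by (rule less.hyps) (use \<open>a = Suc a'\<close> \<open>b = Suc b'\<close> in simp)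
      have "P (Suc a') (Suc b') s = P (Suc a') b' s + (if Suc b' \<le> s then P a' (Suc b') (s - Suc b') else 0)"
        by (rule rec2)
      also have "\<dots> = P b' (Suc a') s + (if Suc b' \<le> s then P (Suc b') a' (s - Suc b') else 0)"
        by (simp only: h1 h2)
      also have "\<dots> = P (Suc b') (Suc a') s"
        by (rule rec1[symmetric])
      finally show ?thesis using \<open>a = Suc a'\<close> \<open>b = Suc b'\<close> by simp
    qed
  qed
qed

lemma S_big_a: "s \<le> a \<Longrightarrow> S a m s = S s m s"
  unfolding S_def using parts_le_size by (auto intro: order_trans)

lemma W_P: "W k s = P s k s"
  unfolding W_def P_S S_def using parts_le_size by (metis (no_types, lifting))

lemma sum_restr: fixes x :: "nat \<Rightarrow> nat"
  assumes "b \<le> s" "\<forall>r. r \<notin> {1..b} \<longrightarrow> x r = 0"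
  shows "(\<Sum>r=1..s. h r * x r) = (\<Sum>r=1..b. h r * x r)"
  by (rule sum.mono_neutral_right) (use assms in auto)

lemma S_emb: "b \<le> s \<Longrightarrow> S a b s = {x \<in> S s s s. (\<Sum>r=1..s. x r) \<le> a \<and> (\<forall>r. b < r \<longrightarrow> x r = 0)}"
proof (intro set_eqI iffI)
  fix x assume b: "b \<le> s" and x: "x \<in> S a b s"
  have supp: "\<forall>r. r \<notin> {1..b} \<longrightarrow> x r = 0" using x by (simp add: S_def)
  have e1: "(\<Sum>r=1..s. r * x r) = (\<Sum>r=1..b. r * x r)" by (rule sum_restr[OF b supp])
  have e2: "(\<Sum>r=1..s. 1 * x r) = (\<Sum>r=1..b. 1 * x r)" by (rule sum_restr[OF b supp])
  show "x \<in> {x \<in> S s s s. (\<Sum>r=1..s. x r) \<le> a \<and> (\<forall>r. b < r \<longrightarrow> x r = 0)}"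
  proof -
    have xs: "(\<Sum>r=1..b. r * x r) = s" "(\<Sum>r=1..b. x r) \<le> a" using x by (simp_all add: S_def)
    have s1: "(\<Sum>r=1..s. x r) \<le> a" using e2 xs by simp
    have s2: "(\<Sum>r=1..s. r*x r) = s" using e1 xs by simp
    have s3: "\<forall>r. r \<notin> {1..s} \<longrightarrow> x r = 0" using supp b by auto
    have s4: "\<forall>r. b<r \<longrightarrow> x r = 0" using supp by auto
    show ?thesis using s1 s2 s3 s4 parts_le_size[of x s] by (simp add: S_def)
  qed
next
  fix x assume b: "b \<le> s" and x: "x \<in> {x \<in> S s s s. (\<Sum>r=1..s. x r) \<le> a \<and> (\<forall>r. b < r \<longrightarrow> x r = 0)}"
  have xU: "x \<in> S s s s" and xa: "(\<Sum>r=1..s. x r) \<le> a" and xb: "\<forall>r. b < r \<longrightarrow> x r = 0"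
    using x by auto
  have supp0: "x 0 = 0" using xU by (simp add: S_def)
  have supp: "\<forall>r. r \<notin> {1..b} \<longrightarrow> x r = 0"
  proof (intro allI impI)
    fix r assume "r \<notin> {1..b}"
    hence "r = 0 \<or> b < r" by auto
    thus "x r = 0" using supp0 xb by auto
  qed
  have e1: "(\<Sum>r=1..s. r * x r) = (\<Sum>r=1..b. r * x r)" by (rule sum_restr[OF b supp])
  have e2: "(\<Sum>r=1..s. 1 * x r) = (\<Sum>r=1..b. 1 * x r)" by (rule sum_restr[OF b supp])
  have xs: "(\<Sum>r=1..s. r * x r) = s" using xU by (simp add: S_def)
  show "x \<in> S a b s"
    using xs xa e1 e2 supp unfolding S_def by simp
qed

lemma card_split: "finite A \<Longrightarrow> card A = card {x\<in>A. p x} + card {x\<in>A. \<not> p x}"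
proof -
  assume f: "finite A"
  have "A = {x\<in>A. p x} \<union> {x\<in>A. \<not> p x}" by auto
  moreover have "card ({x\<in>A. p x} \<union> {x\<in>A. \<not> p x}) = card {x\<in>A. p x} + card {x\<in>A. \<not> p x}"
    by (rule card_Un_disjoint) (use f in auto)
  ultimately show ?thesis by metis
qed

lemma big_part: fixes x :: "nat \<Rightarrow> nat"
  assumes x: "x \<in> S g g g" and r0: "n < r0" "x r0 \<noteq> 0"
  shows "(\<Sum>r=1..g. x r) + n \<le> g"
proof -
  have supp: "\<forall>r. r \<notin> {1..g} \<longrightarrow> x r = 0" and sz: "(\<Sum>r=1..g. r * x r) = g"
    using x by (simp_all add: S_def)
  have r0g: "r0 \<in> {1..g}"
  proof (rule ccontr)
    assume "r0 \<notin> {1..g}"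
    then have "x r0 = 0" using supp by simp
    with r0(2) show False by simp
  qed
  have "(\<Sum>r=1..g. r * x r) = (\<Sum>r=1..g. x r + (r - 1) * x r)"
  proof (rule sum.cong)
    fix r assume "r \<in> {1..g}"
    then obtain q where "r = Suc q" by (cases r) auto
    then show "r * x r = x r + (r - 1) * x r" by simp
  qed simp
  also have "\<dots> = (\<Sum>r=1..g. x r) + (\<Sum>r=1..g. (r - 1) * x r)" by (rule sum.distrib)
  finally have e: "g = (\<Sum>r=1..g. x r) + (\<Sum>r=1..g. (r - 1) * x r)" using sz by simp
  have "n \<le> (r0 - 1) * 1" using r0 by simp
  also have "\<dots> \<le> (r0 - 1) * x r0" using r0 by (intro mult_le_mono2) simp
  also have "\<dots> \<le> (\<Sum>r=1..g. (r - 1) * x r)" using r0g by (intro member_le_sum) auto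
  finally show ?thesis using e by linarith
qed

theorem theorem2:
  fixes n m :: nat
  assumes "n > 0" and "m > 0"
  shows "(\<forall>g. g \<le> max n m \<longrightarrow> P n m g = W (min n m) g)
       \<and> (\<forall>g. max n m \<le> g \<and> g \<le> n + m \<longrightarrow>
            int (P n m g) = int (W n g) + int (W m g) - int (W (n + m) g))"
proof (intro conjI allI impI)
  fix g assume g: "g \<le> max n m"
  show "P n m g = W (min n m) g"
  proof (cases "m \<le> n")
    case True
    then have "g \<le> n" using g by simp
    then have "P n m g = P g m g" unfolding P_S by (metis S_big_a)
    then show ?thesis using True by (simp add: W_P min_def)
  next
    case False
    then have "g \<le> m" using g by simp
    have "P n m g = P m n g" by (rule P_sym)
    also have "\<dots> = P g n g" using \<open>g \<le> m\<close> unfolding P_S by (metis S_big_a)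
    finally show ?thesis using False by (simp add: W_P min_def)
  qed
next
  fix g assume g: "max n m \<le> g \<and> g \<le> n + m"
  hence ng: "n \<le> g" and mg: "m \<le> g" and gnm: "g \<le> n + m" by auto
  let ?U = "S g g g"
  let ?Q = "\<lambda>x. (\<Sum>r=1..g. x r) \<le> m"
  let ?R = "\<lambda>x::nat\<Rightarrow>nat. \<forall>r. n < r \<longrightarrow> x r = 0"
  have inU: "\<And>x. x \<in> ?U \<Longrightarrow> (\<Sum>r=1..g. x r) \<le> g \<and> (\<forall>r. g < r \<longrightarrow> x r = 0)"
  proof -
    fix x assume x: "x \<in> ?U"
    have a: "(\<Sum>r=1..g. x r) \<le> g" using x parts_le_size[of x g] by (simp add: S_def)
    have b: "\<forall>r. g < r \<longrightarrow> x r = 0" using x by (simp add: S_def)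
    show "(\<Sum>r=1..g. x r) \<le> g \<and> (\<forall>r. g < r \<longrightarrow> x r = 0)" using a b by blast
  qed
  have c1: "P n m g = card {x\<in>?U. ?Q x \<and> ?R x}"
    using P_sym[of n m g] S_emb[OF ng, of m] by (simp add: P_S)
  have c2: "W n g = card {x\<in>?U. ?R x}"
  proof -
    have "{x\<in>?U. (\<Sum>r=1..g. x r) \<le> g \<and> ?R x} = {x\<in>?U. ?R x}" using inU by auto
    then show ?thesis using S_emb[OF ng, of g] by (simp add: W_P P_S)
  qed
  have c3: "W m g = card {x\<in>?U. ?Q x}"
  proof -
    have "{x\<in>?U. ?Q x \<and> (\<forall>r. g < r \<longrightarrow> x r = 0)} = {x\<in>?U. ?Q x}" using inU by auto
    then show ?thesis using S_emb[of g g m] P_sym[of g m g] by (simp add: W_P P_S)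
  qed
  have c4: "W (n+m) g = card ?U"
  proof -
    have "{x\<in>?U. (\<Sum>r=1..g. x r) \<le> n + m \<and> (\<forall>r. g < r \<longrightarrow> x r = 0)} = ?U" using inU gnm by fastforce
    then show ?thesis using S_emb[of g g "n+m"] P_sym[of g "n+m" g] by (simp add: W_P P_S)
  qed
  have fin: "finite ?U" by (rule finite_S)
  have key: "{x\<in>{x\<in>?U. ?Q x}. \<not> ?R x} = {x\<in>?U. \<not> ?R x}"
  proof -
    have "\<And>x. x \<in> ?U \<Longrightarrow> \<not> ?R x \<Longrightarrow> ?Q x"
    proof -
      fix x assume x: "x \<in> ?U" "\<not> ?R x"
      then obtain r0 where "n < r0" "x r0 \<noteq> 0" by auto
      from big_part[OF x(1) this] gnm show "?Q x" by linarith
    qed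
    then show ?thesis by auto
  qed
  have s1: "card {x\<in>?U. ?Q x} = card {x\<in>{x\<in>?U. ?Q x}. ?R x} + card {x\<in>{x\<in>?U. ?Q x}. \<not> ?R x}"
    by (rule card_split) (use fin in auto)
  have s2: "card ?U = card {x\<in>?U. ?R x} + card {x\<in>?U. \<not> ?R x}"
    by (rule card_split[OF fin])
  have e: "{x\<in>{x\<in>?U. ?Q x}. ?R x} = {x\<in>?U. ?Q x \<and> ?R x}" by auto
  show "int (P n m g) = int (W n g) + int (W m g) - int (W (n + m) g)"
    using c1 c2 c3 c4 s1 s2 key e by simp
qed

end
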